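(* Let $(G;+)$ be a finite abelian group, $n\ge3$, and suppose that $\rho=\{(a_1,\dots,a_n)\in G^n:\ a_1+\dots+a_n=0\}$ is a key relation. Then the order of $G$ is a power of a prime number.
   Context: A unary vector-function is a tuple $\Psi=(\psi_1,\dots,\psi_n)$ of maps $\psi_i:G\to G$ acting coordinatewise; it preserves $\rho$ if $\Psi(\rho)\subseteq\rho$. $\rho\subseteq G^n$ is a key relation if there is $\beta\in G^n\setminus\rho$ (a key tuple) such that every $\alpha\in G^n\setminus\rho$ is mapped to $\beta$ by some unary vector-function preserving $\rho$. *)

theory Defs
  imports "HOL-Computational_Algebra.Primes"
begin

text \<open>n-tuples over G are lists of length n; a unary vector-function is a list
of n unary maps acting coordinatewise.\<close>

definition tuples :: "nat \<Rightarrow> 'a list set" where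
  "tuples n = {xs. length xs = n}"

definition vapply :: "('a \<Rightarrow> 'a) list \<Rightarrow> 'a list \<Rightarrow> 'a list" where
  "vapply \<Psi> xs = map2 (\<lambda>f x. f x) \<Psi> xs"

definition vpreserves :: "('a \<Rightarrow> 'a) list \<Rightarrow> 'a list set \<Rightarrow> bool" where
  "vpreserves \<Psi> \<rho> \<longleftrightarrow> (\<forall>\<alpha>\<in>\<rho>. vapply \<Psi> \<alpha> \<in> \<rho>)"

definition key_relation :: "nat \<Rightarrow> 'a list set \<Rightarrow> bool" where
  "key_relation n \<rho> \<longleftrightarrow> \<rho> \<subseteq> tuples n \<and>
     (\<exists>\<beta>\<in>tuples n - \<rho>. \<forall>\<alpha>\<in>tuples n - \<rho>.
        \<exists>\<Psi>. length \<Psi> = n \<and> vpreserves \<Psi> \<rho> \<and> vapply \<Psi> \<alpha> = \<beta>)"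

end

theory Submission
  imports Defs "HOL-Algebra.Sylow" "HOL-Algebra.Multiplicative_Group"
begin

definition mulk :: "nat \<Rightarrow> 'a::ab_group_add \<Rightarrow> 'a" where
  "mulk k x = (\<Sum>i<k. x)"

lemma mulk_add: "mulk (a + b) x = mulk a x + mulk b x"
  by (induction b) (simp_all add: mulk_def add.assoc)

lemma mulk_Suc: "mulk (Suc a) x = x + mulk a x"
  by (simp add: mulk_def add.commute)

lemma mulk_mult: "mulk (a * b) x = mulk a (mulk b x)"
  by (induction a) (simp_all add: mulk_add mulk_Suc, simp add: mulk_def)

lemma mulk0: "mulk k (0::'a::ab_group_add) = 0" by (simp add: mulk_def)

lemma mulk_1: "mulk 1 x = x" by (simp add: mulk_def)

definition addG :: "('a::ab_group_add) monoid" where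
  "addG = \<lparr>carrier = UNIV, mult = (+), one = 0\<rparr>"

lemma addG_group: "group (addG :: ('a::ab_group_add) monoid)"
  by (rule groupI) (auto simp: addG_def add.assoc intro: exI[of _ "- x" for x])

lemma pow_mulk: "x [^]\<^bsub>(addG::('a::ab_group_add) monoid)\<lparr>carrier := H\<rparr>\<^esub> k = mulk k x"
  by (induction k) (simp_all add: addG_def mulk_def add.commute)

lemma cauchy_ab:
  fixes dummy :: "'a::{ab_group_add,finite}"
  assumes "prime q" "q dvd card (UNIV::'a set)"
  shows "\<exists>s::'a. s \<noteq> 0 \<and> mulk q s = 0"
proof -
  obtain m where m: "card (UNIV::'a set) = q ^ 1 * m" using assms(2) by auto
  have "order (addG::'a monoid) = q ^ 1 * m" using m by (simp add: order_def addG_def)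
  moreover have "finite (carrier (addG::'a monoid))" by simp
  ultimately obtain H where H: "subgroup H (addG::'a monoid)" "card H = q ^ 1"
    using sylow_thm[OF assms(1) addG_group] by blast
  have "card H > 1" using H(2) assms(1) prime_gt_1_nat by simp
  then obtain h where h: "h \<in> H" "h \<noteq> 0"
  proof -
    have "\<not> H \<subseteq> {0}"
    proof
      assume "H \<subseteq> {0}"
      then have "card H \<le> card {0::'a}" by (intro card_mono) auto
      then show False using \<open>card H > 1\<close> by simp
    qed
    then show ?thesis using that by blast
  qed
  have g: "group ((addG::'a monoid)\<lparr>carrier := H\<rparr>)"
    using subgroup.subgroup_is_group[OF H(1) addG_group] .
  have "h [^]\<^bsub>(addG::'a monoid)\<lparr>carrier := H\<rparr>\<^esub> order ((addG::'a monoid)\<lparr>carrier := H\<rparr>) = \<one>\<^bsub>(addG::'a monoid)\<lparr>carrier := H\<rparr>\<^esub>"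
    using group.pow_order_eq_1[OF g] h by simp
  then have "mulk (order ((addG::'a monoid)\<lparr>carrier := H\<rparr>)) h = \<one>\<^bsub>(addG::'a monoid)\<lparr>carrier := H\<rparr>\<^esub>"
    unfolding pow_mulk .
  then have "mulk q h = 0" using H(2) by (simp add: order_def addG_def)
  then show ?thesis using h by blast
qed

lemma sum_rep0 [simp]: "sum_list (replicate m (0::'a::monoid_add)) = 0"
  by (induction m) auto

lemma map2_rep: "map2 (\<lambda>f x. f x) rest (replicate (length rest) 0) = map (\<lambda>f. f 0) rest"
  by (induction rest) auto

lemma mulk_hom:
  assumes "\<And>a b. \<phi> (a + b) = \<phi> a + \<phi> (b::'a::ab_group_add)" 
  shows "\<phi> (mulk k x) = mulk k (\<phi> x :: 'b::ab_group_add)"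
proof -
  have z: "\<phi> 0 = 0" using assms[of 0 0] by simp
  show ?thesis by (induction k) (simp_all add: mulk_Suc assms z, simp add: mulk_def z)
qed

lemma key_prop:
  fixes n :: nat and t s :: "'a::ab_group_add"
  assumes "n \<ge> 3" and \<beta>: "\<beta> \<in> tuples n - {xs :: 'a list. length xs = n \<and> sum_list xs = 0}"
    and key: "\<forall>\<alpha>\<in>tuples n - {xs :: 'a list. length xs = n \<and> sum_list xs = 0}.
        \<exists>\<Psi>. length \<Psi> = n \<and> vpreserves \<Psi> {xs :: 'a list. length xs = n \<and> sum_list xs = 0} \<and> vapply \<Psi> \<alpha> = \<beta>"
    and t: "t = sum_list \<beta>" and s: "s \<noteq> 0" and k: "mulk k s = 0"
  shows "mulk k t = 0"
proof -
  let ?\<rho> = "{xs :: 'a list. length xs = n \<and> sum_list xs = 0}"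
  define \<alpha> where "\<alpha> = [s,0,0] @ replicate (n-3) (0::'a)"
  have "\<alpha> \<in> tuples n - ?\<rho>" using assms(1) s by (auto simp: \<alpha>_def tuples_def)
  then obtain \<Psi> where len: "length \<Psi> = n" and pres: "vpreserves \<Psi> ?\<rho>" and eq: "vapply \<Psi> \<alpha> = \<beta>"
    using key by blast
  have "Suc (Suc (Suc 0)) \<le> length \<Psi>" using len assms(1) by simp
  then obtain f0 f1 f2 rest where Psi: "\<Psi> = f0 # f1 # f2 # rest"
    by (auto simp: Suc_le_length_iff)
  have lr: "length rest = n - 3" using len Psi by simp
  define c where "c = sum_list (map (\<lambda>f. f 0) rest)"
  have va: "vapply \<Psi> ([x,y,z] @ replicate (n-3) 0) = [f0 x, f1 y, f2 z] @ map (\<lambda>f. f 0) rest" for x y z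
    using map2_rep[of rest] lr by (simp add: vapply_def Psi)
  have P: "(f0 x + f1 y) + (f2 z + c) = 0" if "x + y + z = 0" for x y z
  proof -
    have "[x,y,z] @ replicate (n-3) 0 \<in> ?\<rho>" using that assms(1) by (simp add: add.assoc[symmetric])
    then have "vapply \<Psi> ([x,y,z] @ replicate (n-3) 0) \<in> ?\<rho>" using pres by (simp add: vpreserves_def)
    then show ?thesis unfolding va by (simp add: c_def add.assoc)
  qed
  have tt: "t = (f0 s + f1 0) + (f2 0 + c)" using eq va[of s 0 0] by (simp add: t \<alpha>_def c_def add.assoc)
  define \<phi> where "\<phi> x = f0 x - f0 0" for x
  have add: "\<phi> (a + b) = \<phi> a + \<phi> b" for a b
  proof -
    have E1: "(f0 a + f1 b) + (f2 (-(a+b)) + c) = 0" by (rule P) simp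
    have E2: "(f0 (a+b) + f1 0) + (f2 (-(a+b)) + c) = 0" by (rule P) simp
    have E3: "(f0 0 + f1 b) + (f2 (-b) + c) = 0" by (rule P) simp
    have E4: "(f0 b + f1 0) + (f2 (-b) + c) = 0" by (rule P) simp
    have A0: "(f0 a + f1 b) + (f2 (-(a+b)) + c) = (f0 (a+b) + f1 0) + (f2 (-(a+b)) + c)"
      using E1 E2 by simp
    have A: "f0 a + f1 b = f0 (a+b) + f1 0" using A0 by simp
    have B0: "(f0 0 + f1 b) + (f2 (-b) + c) = (f0 b + f1 0) + (f2 (-b) + c)"
      using E3 E4 by simp
    have B: "f0 0 + f1 b = f0 b + f1 0" using B0 by simp
    have X: "(f0 a + f1 b) + (f0 b + f1 0) = (f0 (a+b) + f1 0) + (f0 0 + f1 b)"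
      by (simp only: A B[symmetric])
    have Y: "(f0 a + f0 b) + (f1 b + f1 0) = (f0 (a+b) + f0 0) + (f1 b + f1 0)"
      using X by (simp add: algebra_simps)
    have C: "f0 a + f0 b = f0 (a+b) + f0 0" using Y by simp
    have C': "f0 (a+b) = f0 a + f0 b - f0 0" by (subst eq_diff_eq) (rule C[symmetric])
    show ?thesis unfolding \<phi>_def C' by (simp add: algebra_simps)
  qed
  have D: "f2 0 + c = - (f0 0 + f1 0)"
    by (subst eq_neg_iff_add_eq_0) (use P[of 0 0 0] in \<open>simp add: add.commute\<close>)
  have "t = \<phi> s" unfolding tt D \<phi>_def by (simp add: algebra_simps)
  then have "mulk k t = \<phi> (mulk k s)" using mulk_hom[of \<phi>, OF add] by simp
  also have "\<dots> = 0" using k by (simp add: \<phi>_def)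
  finally show ?thesis .
qed


theorem mainTheorem16:
  fixes n :: nat
  assumes "n \<ge> 3"
    and "key_relation n {xs :: ('a::{ab_group_add, finite}) list. length xs = n \<and> sum_list xs = 0}"
  shows "\<exists>p k. prime (p::nat) \<and> card (UNIV :: 'a set) = p ^ k"
proof -
  let ?\<rho> = "{xs :: 'a list. length xs = n \<and> sum_list xs = 0}"
  from assms(2) obtain \<beta> where \<beta>: "\<beta> \<in> tuples n - ?\<rho>" and key:
    "\<forall>\<alpha>\<in>tuples n - ?\<rho>. \<exists>\<Psi>. length \<Psi> = n \<and> vpreserves \<Psi> ?\<rho> \<and> vapply \<Psi> \<alpha> = \<beta>"
    unfolding key_relation_def by blast
  define t where "t = sum_list \<beta>"
  have t0: "t \<noteq> 0" using \<beta> by (simp add: t_def tuples_def)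
  have ann: "mulk q t = 0" if qq: "prime q" "q dvd card (UNIV::'a set)" for q
  proof -
    obtain s :: 'a where "s \<noteq> 0" "mulk q s = 0" using cauchy_ab[OF qq] by blast
    then show ?thesis using key_prop[OF assms(1) \<beta> key t_def] by blast
  qed
  define N where "N = card (UNIV::'a set)"
  have N0: "N \<noteq> 0" by (simp add: N_def)
  show ?thesis
  proof (cases "N = 1")
    case True
    then show ?thesis by (intro exI[of _ 2] exI[of _ 0]) (simp add: N_def)
  next
    case False
    then have nu: "\<not> is_unit N" by simp
    obtain p k n' where p: "prime p" "p dvd N" "\<not> p dvd n'" "k > 0" "N = p ^ k * n'"
      using divide_out_primepow[OF N0 nu] by blast
    show ?thesis
    proof (cases "n' = 1")
      case True
      then show ?thesis using p by (auto simp: N_def)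
    next
      case False
      have "n' \<noteq> 0" using p N0 by auto
      then obtain q where q: "prime q" "q dvd n'" using False prime_factor_nat by blast
      have qp: "q \<noteq> p" using q p by auto
      have qN: "q dvd N" using q p by auto
      have tp: "mulk p t = 0" using ann p N_def by auto
      have tq: "mulk q t = 0" using ann q qN N_def by auto
      have cop: "gcd p q = 1" using p(1) q(1) qp by (simp add: primes_coprime)
      obtain x y where xy: "p * x = q * y + gcd p q" using bezout_nat[of p q] p(1) by (auto simp: prime_gt_0_nat)
      have "mulk (p * x) t = mulk (q * y + 1) t" using xy cop by simp
      moreover have "mulk (p * x) t = 0"
        by (metis mult.commute mulk_mult tp mulk0)
      moreover have "mulk (q * y + 1) t = t"
        by (metis mulk_add mulk_1 mult.commute mulk_mult tq mulk0 add_0)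
      ultimately have "t = 0" by (metis)
      then show ?thesis using t0 by blast
    qed
  qed
qed

end
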